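(* Let $p,q\in E$, let $\mathsf{v}\in V$ be spacelike and let $\mathsf{w}\in V$ be future-pointing timelike with $\mathsf{w}\cdot\mathsf{v}\neq0$. Then $q+t\mathsf{w}\in\mathrm{int}\big(\mathcal{H}(\mathsf{v},p)\big)$ for all sufficiently large $t$ if and only if the point $[q+\mathbb{R}_+\mathsf{w}]\in\mathbb{H}^2$ lies in $\mathrm{int}\big(\mathcal{HS}(\mathsf{v})\big)$.
   Context: $V=\mathbb{R}^3$ with Lorentzian inner product $x\cdot y=x_1y_1+x_2y_2-x_3y_3$ and standard orientation; $E$ is the affine space with translation space $V$. Timelike: $x\cdot x<0$; null: $x\cdot x=0$; spacelike: $x\cdot x>0$; future-pointing: third coordinate positive. Points of $\mathbb{H}^2$ are identified with parallelism classes $[q+\mathbb{R}_+\mathsf{w}]$ of future-pointing timelike rays. For spacelike $\mathsf{v}$, $\mathcal{HS}(\mathsf{v})=\{[q+\mathbb{R}_+\mathsf{w}]\in\mathbb{H}^2:\mathsf{w}\cdot\mathsf{v}\ge0\}$ is a half-plane of $\mathbb{H}^2$. $\mathsf{v}^-,\mathsf{v}^+$ are the two future-pointing null vectors of Euclidean length $1$ in $\mathsf{v}^\perp$, labelled so that $(\mathsf{v}^-,\mathsf{v}^+,\mathsf{v})$ is positively oriented. The crooked half-space $\mathcal{H}(\mathsf{v},p)$ is the set of $q\in E$ with $(q-p)\cdot\mathsf{v}^+\le0$ if $(q-p)\cdot\mathsf{v}\ge0$, and $(q-p)\cdot\mathsf{v}^-\ge0$ if $(q-p)\cdot\mathsf{v}\le0$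 (both when $(q-p)\cdot\mathsf{v}=0$). *)

theory Defs
  imports "HOL-Analysis.Analysis"
begin

text \<open>V = R^3 with Lorentzian inner product; the affine space E is modelled by V itself.\<close>

definition lin :: "real^3 \<Rightarrow> real^3 \<Rightarrow> real" where
  "lin x y = x$1 * y$1 + x$2 * y$2 - x$3 * y$3"

definition timelike :: "real^3 \<Rightarrow> bool" where "timelike x \<longleftrightarrow> lin x x < 0"
definition nullvec :: "real^3 \<Rightarrow> bool" where "nullvec x \<longleftrightarrow> lin x x = 0"
definition spacelike :: "real^3 \<Rightarrow> bool" where "spacelike x \<longleftrightarrow> lin x x > 0"
definition future_pointing :: "real^3 \<Rightarrow> bool" where "future_pointing x \<longleftrightarrow> x$3 > 0"

definition det3 :: "real^3 \<Rightarrow> real^3 \<Rightarrow> real^3 \<Rightarrow> real" where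
  "det3 a b c = det ((\<chi> i. if i = 1 then a else if i = 2 then b else c) :: real^3^3)"

definition null_pair :: "real^3 \<Rightarrow> real^3 \<Rightarrow> real^3 \<Rightarrow> bool" where
  "null_pair v a b \<longleftrightarrow>
     nullvec a \<and> nullvec b \<and> future_pointing a \<and> future_pointing b \<and>
     norm a = 1 \<and> norm b = 1 \<and> lin a v = 0 \<and> lin b v = 0 \<and> det3 a b v > 0"

definition vminus :: "real^3 \<Rightarrow> real^3" where
  "vminus v = fst (THE ab. null_pair v (fst ab) (snd ab))"
definition vplus :: "real^3 \<Rightarrow> real^3" where
  "vplus v = snd (THE ab. null_pair v (fst ab) (snd ab))"

definition crooked_halfspace :: "real^3 \<Rightarrow> real^3 \<Rightarrow> (real^3) set" where
  "crooked_halfspace v p = {q.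
     (lin (q - p) v \<ge> 0 \<longrightarrow> lin (q - p) (vplus v) \<le> 0) \<and>
     (lin (q - p) v \<le> 0 \<longrightarrow> lin (q - p) (vminus v) \<ge> 0)}"

text \<open>H^2 modelled by the upper sheet of the hyperboloid (canonical representatives
  of parallelism classes of future-pointing timelike rays), with the subspace topology.\<close>
definition H2 :: "(real^3) set" where
  "H2 = {u. lin u u = -1 \<and> future_pointing u}"

text \<open>The point [q + R_+ w] of H^2 (independent of q).\<close>
definition ray_point :: "real^3 \<Rightarrow> real^3 \<Rightarrow> real^3" where
  "ray_point q w = (1 / sqrt (- lin w w)) *\<^sub>R w"

definition HS :: "real^3 \<Rightarrow> (real^3) set" where
  "HS v = {u \<in> H2. lin u v \<ge> 0}"

end

theory Submission
  imports Defs
begin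

lemma circ_line:
  fixes n1 n2 p1 p2 q1 q2 r1 r2 c k :: real
  assumes n: "n1^2+n2^2 > 0" and hp: "p1*n1+p2*n2 = c" and hq: "q1*n1+q2*n2=c" and hr: "r1*n1+r2*n2=c"
    and cp: "p1^2+p2^2=k" and cq: "q1^2+q2^2=k" and cr: "r1^2+r2^2=k" and ne: "(p1,p2) \<noteq> (q1,q2)"
  shows "(r1 = p1 \<and> r2 = p2) \<or> (r1 = q1 \<and> r2 = q2)"
proof -
  define d1 d2 e1 e2 where "d1 = q1 - p1" "d2 = q2 - p2" "e1 = r1 - p1" "e2 = r2 - p2"
  have dn: "d1*n1 + d2*n2 = 0" using hp hq unfolding d1_d2_e1_e2_def by (simp add: algebra_simps)
  have en: "e1*n1 + e2*n2 = 0" using hp hr unfolding d1_d2_e1_e2_def by (simp add: algebra_simps)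
  define X where "X = e1*d2 - e2*d1"
  have "n1 * X = 0"
  proof -
    have "n1 * X = e1 * (n1*d2) - e2 * (n1*d1)" unfolding X_def by (simp add: algebra_simps)
    also have "n1*d1 = - (n2*d2)" using dn by (simp add: algebra_simps)
    finally have "n1 * X = d2 * (e1*n1 + e2*n2)" by (simp add: algebra_simps)
    thus ?thesis using en by simp
  qed
  moreover have "n2 * X = 0"
  proof -
    have "n2 * X = e1 * (n2*d2) - e2 * (n2*d1)" unfolding X_def by (simp add: algebra_simps)
    also have "n2*d2 = - (n1*d1)" using dn by (simp add: algebra_simps)
    finally have "n2 * X = - d1 * (e1*n1 + e2*n2)" by (simp add: algebra_simps)
    thus ?thesis using en by simp
  qed
  ultimately have X0: "X = 0" using n by (cases "n1 = 0") (auto simp: power2_eq_square)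
  define D where "D = d1^2 + d2^2"
  have Dp: "D > 0" using ne unfolding D_def d1_d2_e1_e2_def
    by (smt (verit, ccfv_SIG) prod.inject sum_power2_gt_zero_iff)
  define l where "l = (e1*d1 + e2*d2) / D"
  have e1l: "e1 = l * d1"
  proof -
    have "e1 * D = (e1*d1 + e2*d2) * d1" using X0 unfolding D_def X_def
      by (simp add: power2_eq_square algebra_simps)
    thus ?thesis unfolding l_def using Dp by (simp add: field_simps)
  qed
  have e2l: "e2 = l * d2"
  proof -
    have "e2 * D = (e1*d1 + e2*d2) * d2" using X0 unfolding D_def X_def
      by (simp add: power2_eq_square algebra_simps)
    thus ?thesis unfolding l_def using Dp by (simp add: field_simps)
  qed
  have pd: "2*(p1*d1 + p2*d2) + D = 0" using cp cq unfolding D_def d1_d2_e1_e2_def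
    by (simp add: power2_eq_square algebra_simps)
  have pe: "2*(p1*e1 + p2*e2) + (e1^2+e2^2) = 0" using cp cr unfolding d1_d2_e1_e2_def
    by (simp add: power2_eq_square algebra_simps)
  have "2*l*(p1*d1 + p2*d2) + l^2 * D = 0" using pe unfolding e1l e2l D_def
    by (simp add: power2_eq_square algebra_simps)
  moreover have "l * (l - 1) * D = (2*l*(p1*d1 + p2*d2) + l^2 * D) - l * (2*(p1*d1 + p2*d2) + D)"
    by (simp add: power2_eq_square algebra_simps)
  ultimately have "l * (l - 1) * D = 0" using pd by simp
  hence "l = 0 \<or> l = 1" using Dp by auto
  thus ?thesis using e1l e2l unfolding d1_d2_e1_e2_def by auto
qed
lemma det3_formula: "det3 a b c =
    a$1 * b$2 * c$3 + a$2 * b$3 * c$1 + a$3 * b$1 * c$2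
  - a$1 * b$3 * c$2 - a$2 * b$1 * c$3 - a$3 * b$2 * c$1"
  unfolding det3_def det_3 by simp

lemma norm3: "norm (x::real^3) = sqrt (x$1^2 + x$2^2 + x$3^2)"
  unfolding norm_vec_def L2_set_def sum_3 by simp

lemma alg1: fixes x y z s :: real assumes "s^2 = x^2+y^2 - z^2"
  shows "(z * x - s * y)^2 + (z * y + s * x)^2 = (x^2+y^2)^2"
proof -
  have "(z * x - s * y)^2 + (z * y + s * x)^2 = (z^2+s^2) * (x^2+y^2)" by (simp add: power2_eq_square algebra_simps)
  thus ?thesis using assms by (simp add: power2_eq_square)
qed
lemma alg2: fixes x y z s :: real assumes "s^2 = x^2+y^2 - z^2"
  shows "(z * x + s * y)^2 + (z * y - s * x)^2 = (x^2+y^2)^2"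
  using alg1[of "-s" x y z] assms by simp
lemma alg3: fixes x y z s r :: real assumes "s^2 = x^2+y^2 - z^2" "r = x^2+y^2"
  shows "(z * x - s * y)  *  (z * y - s * x)  *  z - (z * y + s * x)  *  (z * x + s * y)  *  z
        + r  *  (z * y + s * x)  *  x - r  *  (z * x - s * y)  *  y
        + r  *  (z * x + s * y)  *  y - r  *  (z * y - s * x)  *  x = 2  *  s^3  *  r"
proof -
  have "(z * x - s * y)  *  (z * y - s * x)  *  z - (z * y + s * x)  *  (z * x + s * y)  *  z
        + r  *  (z * y + s * x)  *  x - r  *  (z * x - s * y)  *  y
        + r  *  (z * x + s * y)  *  y - r  *  (z * y - s * x)  *  x = 2 * s * (r * r - z^2 * r)"
    using assms(2) by (simp add: power2_eq_square algebra_simps)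
  also have "\<dots> = 2 * s * r * (r - z^2)" by (simp add: algebra_simps)
  also have "r - z^2 = s^2" using assms by simp
  
  finally show ?thesis by (simp add: power2_eq_square power3_eq_cube)
qed

lemma np_exists:
  assumes sp: "spacelike v"
  shows "\<exists>a b. null_pair v a b"
proof -
  define r2 where "r2 = v$1^2 + v$2^2"
  have r2: "r2 > v$3^2" using sp unfolding spacelike_def lin_def r2_def by (simp add: power2_eq_square)
  hence r2p: "r2 > 0" by (smt (verit) zero_le_power2)
  define s where "s = sqrt (r2 - v$3^2)"
  have s: "s > 0" "s^2 = r2 - v$3^2" using r2 unfolding s_def by auto
  define c :: real where "c = 1 / sqrt 2"
  have c: "c > 0" "c^2 = 1/2" unfolding c_def by (auto simp: power_divide)
  define a :: "real^3" where "a = vector [c* (v$3* v$1 - s* v$2)/r2, c* (v$3* v$2 + s* v$1)/r2, c]"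
  define b :: "real^3" where "b = vector [c* (v$3* v$1 + s* v$2)/r2, c* (v$3* v$2 - s* v$1)/r2, c]"
  have e1: "(v$3* v$1 - s* v$2)^2 + (v$3* v$2 + s* v$1)^2 = r2^2"
    using alg1[of s "v$1" "v$2" "v$3"] s(2) unfolding r2_def by simp
  have e2: "(v$3* v$1 + s* v$2)^2 + (v$3* v$2 - s* v$1)^2 = r2^2"
    using alg2[of s "v$1" "v$2" "v$3"] s(2) unfolding r2_def by simp
  have ka: "a$1^2 + a$2^2 = c^2" unfolding a_def
  proof -
    have "(c* (v$3* v$1 - s* v$2)/r2)^2 + (c* (v$3* v$2 + s* v$1)/r2)^2
        = c^2 * ((v$3* v$1 - s* v$2)^2 + (v$3* v$2 + s* v$1)^2) / r2^2"
      using r2p by (simp add: field_simps power2_eq_square)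
    also have "\<dots> = c^2" using e1 r2p by simp
    finally show "(vector [c* (v$3* v$1 - s* v$2)/r2, c* (v$3* v$2 + s* v$1)/r2, c] :: real^3)$1^2 + (vector [c* (v$3* v$1 - s* v$2)/r2, c* (v$3* v$2 + s* v$1)/r2, c] :: real^3)$2^2 = c^2" by simp
  qed
  have kb: "b$1^2 + b$2^2 = c^2" unfolding b_def
  proof -
    have "(c* (v$3* v$1 + s* v$2)/r2)^2 + (c* (v$3* v$2 - s* v$1)/r2)^2
        = c^2 * ((v$3* v$1 + s* v$2)^2 + (v$3* v$2 - s* v$1)^2) / r2^2"
      using r2p by (simp add: field_simps power2_eq_square)
    also have "\<dots> = c^2" using e2 r2p by simp
    finally show "(vector [c* (v$3* v$1 + s* v$2)/r2, c* (v$3* v$2 - s* v$1)/r2, c] :: real^3)$1^2 + (vector [c* (v$3* v$1 + s* v$2)/r2, c* (v$3* v$2 - s* v$1)/r2, c] :: real^3)$2^2 = c^2" by simp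
  qed
  have n1: "(v$3* v$1 - s* v$2) * v$1 + (v$3* v$2 + s* v$1) * v$2 = v$3 * r2"
    by (simp add: r2_def algebra_simps power2_eq_square)
  have n2: "(v$3* v$1 + s* v$2) * v$1 + (v$3* v$2 - s* v$1) * v$2 = v$3 * r2"
    by (simp add: r2_def algebra_simps power2_eq_square)
  have la: "lin a v = 0"
  proof -
    have "lin a v = c * ((v$3* v$1 - s* v$2) * v$1 + (v$3* v$2 + s* v$1) * v$2) / r2 - c * v$3"
      unfolding a_def lin_def using r2p by (simp add: field_simps)
    thus ?thesis unfolding n1 using r2p by simp
  qed
  have lb: "lin b v = 0"
  proof -
    have "lin b v = c * ((v$3* v$1 + s* v$2) * v$1 + (v$3* v$2 - s* v$1) * v$2) / r2 - c * v$3"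
      unfolding b_def lin_def using r2p by (simp add: field_simps)
    thus ?thesis unfolding n2 using r2p by simp
  qed
  have e3: "(v$3* v$1 - s* v$2) * (v$3* v$2 - s* v$1) * v$3 - (v$3* v$2 + s* v$1) * (v$3* v$1 + s* v$2) * v$3
        + r2 * (v$3* v$2 + s* v$1) * v$1 - r2 * (v$3* v$1 - s* v$2) * v$2
        + r2 * (v$3* v$1 + s* v$2) * v$2 - r2 * (v$3* v$2 - s* v$1) * v$1 = 2 * s^3 * r2"
    using alg3[of s "v$1" "v$2" "v$3" r2] s(2) unfolding r2_def by simp
  have d0: "det3 a b v = c^2/r2^2 * ((v$3* v$1 - s* v$2) * (v$3* v$2 - s* v$1) * v$3 - (v$3* v$2 + s* v$1) * (v$3* v$1 + s* v$2) * v$3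
        + r2 * (v$3* v$2 + s* v$1) * v$1 - r2 * (v$3* v$1 - s* v$2) * v$2
        + r2 * (v$3* v$1 + s* v$2) * v$2 - r2 * (v$3* v$2 - s* v$1) * v$1)"
    unfolding det3_formula a_def b_def using r2p
    by (simp add: field_simps power2_eq_square)
  have d: "det3 a b v = 2 * c^2 * s^3 / r2" unfolding d0 e3 using r2p
    by (simp add: field_simps power2_eq_square)
  have a3: "a$3 = c" "b$3 = c" unfolding a_def b_def by simp_all
  have na: "nullvec a" "nullvec b" unfolding nullvec_def lin_def
    using ka kb a3 by (simp_all add: power2_eq_square)
  have nn: "norm a = 1" "norm b = 1" unfolding norm3 using ka kb a3 c by simp_all
  have dp: "det3 a b v > 0" unfolding d using c s r2p by simp
  have "null_pair v a b"
    unfolding null_pair_def future_pointing_def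
    using na nn la lb dp a3 c lin_def by simp
  thus ?thesis by blast
qed

lemma np_vec:
  assumes "nullvec a" "future_pointing a" "norm a = 1" "lin a v = 0"
  shows "a$1^2+a$2^2 = 1/2" "a$3^2 = 1/2" "a$1* v$1 + a$2* v$2 = a$3* v$3" "a$3 > 0"
proof -
  have n: "a$1^2+a$2^2 = a$3^2" using assms(1) unfolding nullvec_def lin_def by (simp add: power2_eq_square)
  have "a$1^2+a$2^2+a$3^2 = 1" using assms(3) unfolding norm3 by simp
  thus "a$3^2 = 1/2" "a$1^2+a$2^2 = 1/2" using n by auto
  show "a$1* v$1 + a$2* v$2 = a$3* v$3" using assms(4) unfolding lin_def by simp
  show "a$3 > 0" using assms(2) unfolding future_pointing_def by simp
qed

lemma vec3_eq: "(x::real^3)$1 = y$1 \<Longrightarrow> x$2 = y$2 \<Longrightarrow> x$3 = y$3 \<Longrightarrow> x = y"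
  by (simp add: vec_eq_iff forall_3)

lemma in_two:
  assumes sp: "spacelike v"
    and A: "nullvec a" "future_pointing a" "norm a = 1" "lin a v = 0"
    and B: "nullvec b" "future_pointing b" "norm b = 1" "lin b v = 0"
    and X: "nullvec x" "future_pointing x" "norm x = 1" "lin x v = 0"
    and ne: "a \<noteq> b"
  shows "x = a \<or> x = b"
proof -
  note a = np_vec[OF A] and b = np_vec[OF B] and xx = np_vec[OF X]
  have ab3: "b$3 = a$3" using a(2,4) b(2,4) by (metis power2_eq_imp_eq less_imp_le)
  have xa3: "x$3 = a$3" using a(2,4) xx(2,4) by (metis power2_eq_imp_eq less_imp_le)
  have n: "v$1^2 + v$2^2 > 0" using sp unfolding spacelike_def lin_def
    by (smt (verit) power2_eq_square zero_le_power2)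
  have ne2: "(a$1, a$2) \<noteq> (b$1, b$2)"
    using ne ab3 vec3_eq[of a b] by auto
  have "(x$1 = a$1 \<and> x$2 = a$2) \<or> (x$1 = b$1 \<and> x$2 = b$2)"
    by (rule circ_line[OF n a(3) _ _ a(1) b(1) xx(1) ne2]) (use b(3) xx(3) ab3 xa3 in auto)
  thus ?thesis using ab3 xa3 vec3_eq[of x a] vec3_eq[of x b] by auto
qed

lemma det3_same: "det3 a a c = 0" unfolding det3_formula by (simp add: algebra_simps)
lemma det3_swap: "det3 b a c = - det3 a b c" unfolding det3_formula by (simp add: algebra_simps)

lemma np_unique:
  assumes sp: "spacelike v" and P: "null_pair v a b" and Q: "null_pair v a' b'"
  shows "a' = a \<and> b' = b"
proof -
  have ne: "a \<noteq> b" using P det3_same unfolding null_pair_def by force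
  have ne': "a' \<noteq> b'" using Q det3_same unfolding null_pair_def by force
  have 1: "a' = a \<or> a' = b" using in_two[OF sp _ _ _ _ _ _ _ _ _ _ _ _ ne] P Q unfolding null_pair_def by blast
  have 2: "b' = a \<or> b' = b" using in_two[OF sp _ _ _ _ _ _ _ _ _ _ _ _ ne] P Q unfolding null_pair_def by blast
  have "\<not> (a' = b \<and> b' = a)" using P Q det3_swap[of b a v] unfolding null_pair_def by force
  thus ?thesis using 1 2 ne' by auto
qed

lemma vpm: assumes sp: "spacelike v" shows "null_pair v (vminus v) (vplus v)"
proof -
  obtain a b where ab: "null_pair v a b" using np_exists[OF sp] by blast
  have "\<exists>!ab. null_pair v (fst ab) (snd ab)"
  proof (rule ex1I[of _ "(a,b)"])
    show "null_pair v (fst (a, b)) (snd (a, b))" using ab by simp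
    fix y assume "null_pair v (fst y) (snd y)"
    from np_unique[OF sp ab this] show "y = (a, b)" by (simp add: prod_eq_iff)
  qed
  from theI'[OF this] show ?thesis unfolding vminus_def vplus_def .
qed

lemma null_future_neg:
  assumes "timelike w" "future_pointing w" "nullvec a" "future_pointing a"
  shows "lin w a < 0"
proof -
  have w: "w$1^2 + w$2^2 < w$3^2" "w$3 > 0" using assms unfolding timelike_def future_pointing_def lin_def
    by (auto simp: power2_eq_square)
  have a: "a$1^2 + a$2^2 = a$3^2" "a$3 > 0" using assms unfolding nullvec_def future_pointing_def lin_def
    by (auto simp: power2_eq_square)
  have cs: "(w$1*a$1 + w$2*a$2)^2 \<le> (w$1^2 + w$2^2) * (a$1^2 + a$2^2)"
  proof -
    have "0 \<le> (w$1*a$2 - w$2*a$1)^2" by simp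
    thus ?thesis by (simp add: power2_eq_square algebra_simps)
  qed
  have "(w$1^2 + w$2^2) * (a$1^2 + a$2^2) < w$3^2 * a$3^2"
    using w a by (simp add: mult_strict_right_mono)
  hence "(w$1*a$1 + w$2*a$2)^2 < (w$3*a$3)^2" using cs by (simp add: power_mult_distrib)
  hence "w$1*a$1 + w$2*a$2 < w$3*a$3"
    using w a by (smt (verit) power2_le_imp_le mult_pos_pos)
  thus ?thesis unfolding lin_def by simp
qed

lemma lin_add: "lin (x + y) z = lin x z + lin y z" unfolding lin_def by (simp add: algebra_simps)
lemma lin_scale: "lin (t *\<^sub>R x) z = t * lin x z" unfolding lin_def by (simp add: algebra_simps)
lemma lin_sym: "lin x y = lin y x" unfolding lin_def by (simp add: algebra_simps)

lemma cont_lin: "continuous_on UNIV (\<lambda>x. lin (x - p) z)"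
  unfolding lin_def by (intro continuous_on_add continuous_on_diff continuous_on_mult continuous_on_component continuous_on_const continuous_on_id)

lemma ev_pos:
  fixes a b :: real assumes "b > 0" shows "\<forall>\<^sub>F t in at_top. a + t * b > 0"
proof -
  have "\<forall>\<^sub>F t in at_top. t > -a/b" by (rule eventually_gt_at_top)
  thus ?thesis by eventually_elim (use assms in \<open>simp add: field_simps\<close>)
qed

lemma ev_neg:
  fixes a b :: real assumes "b < 0" shows "\<forall>\<^sub>F t in at_top. a + t * b < 0"
  using ev_pos[of "-b" "-a"] assms by (auto elim: eventually_mono)


theorem lemma3p1:
  fixes p q v w :: "real^3"
  assumes "spacelike v" and "timelike w" and "future_pointing w" and "lin w v \<noteq> 0"
  shows "(\<forall>\<^sub>F t in at_top. q + t *\<^sub>R w \<in> interior (crooked_halfspace v p))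
     \<longleftrightarrow> ray_point q w \<in> (top_of_set H2) interior_of (HS v)"
proof -
  have np: "null_pair v (vminus v) (vplus v)" using vpm[OF assms(1)] .
  have gp: "lin w (vplus v) < 0" "lin w (vminus v) < 0"
  proof -
    have "nullvec (vplus v)" "future_pointing (vplus v)" "nullvec (vminus v)" "future_pointing (vminus v)"
      using np unfolding null_pair_def by simp_all
    thus "lin w (vplus v) < 0" "lin w (vminus v) < 0" using null_future_neg[OF assms(2,3)] by simp_all
  qed
  have xt: "\<And>t y. lin (q + t *\<^sub>R w - p) y = lin (q - p) y + t * lin w y"
    by (simp add: lin_def algebra_simps)
  define k where "k = 1 / sqrt (- lin w w)"
  have wn: "lin w w < 0" using assms(2) unfolding timelike_def .
  have kp: "k > 0" unfolding k_def using wn by simp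
  have k2: "k^2 * lin w w = -1" unfolding k_def using wn by (simp add: power_divide)
  have u: "ray_point q w = k *\<^sub>R w" unfolding ray_point_def k_def ..
  have luv: "lin (ray_point q w) v = k * lin w v" unfolding u lin_scale ..
  have uH: "ray_point q w \<in> H2"
  proof -
    have "lin (k *\<^sub>R w) (k *\<^sub>R w) = k^2 * lin w w"
      unfolding lin_scale lin_sym[of w "k *\<^sub>R w"] by (simp add: power2_eq_square)
    hence "lin (k *\<^sub>R w) (k *\<^sub>R w) = -1" using k2 by simp
    moreover have "(k *\<^sub>R w)$3 > 0" using kp assms(3) unfolding future_pointing_def by simp
    ultimately show ?thesis unfolding H2_def u future_pointing_def by blast
  qed
  have R: "ray_point q w \<in> (top_of_set H2) interior_of (HS v) \<longleftrightarrow> lin w v > 0"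
  proof
    assume "ray_point q w \<in> (top_of_set H2) interior_of (HS v)"
    hence "ray_point q w \<in> HS v" by (rule subsetD[OF interior_of_subset])
    hence "k * lin w v \<ge> 0" unfolding HS_def luv[symmetric] by simp
    thus "lin w v > 0" using kp assms(4) by (smt (verit) mult_pos_neg)
  next
    assume pos: "lin w v > 0"
    have op: "open {x. 0 < lin (x - 0) v}"
      by (rule open_Collect_less[OF continuous_on_const cont_lin])
    have "H2 \<inter> {x. 0 < lin (x - 0) v} \<subseteq> (top_of_set H2) interior_of (HS v)"
    proof (rule interior_of_maximal)
      show "H2 \<inter> {x. 0 < lin (x - 0) v} \<subseteq> HS v" unfolding HS_def by auto
      show "openin (top_of_set H2) (H2 \<inter> {x. 0 < lin (x - 0) v})" by (rule openin_open_Int[OF op])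
    qed
    moreover have "ray_point q w \<in> H2 \<inter> {x. 0 < lin (x - 0) v}"
      using uH luv kp pos by (simp add: mult_pos_pos)
    ultimately show "ray_point q w \<in> (top_of_set H2) interior_of (HS v)" by (rule subsetD)
  qed
  have L: "(\<forall>\<^sub>F t in at_top. q + t *\<^sub>R w \<in> interior (crooked_halfspace v p)) \<longleftrightarrow> lin w v > 0"
  proof
    assume ev: "\<forall>\<^sub>F t in at_top. q + t *\<^sub>R w \<in> interior (crooked_halfspace v p)"
    show "lin w v > 0"
    proof (rule ccontr)
      assume "\<not> lin w v > 0"
      hence neg: "lin w v < 0" using assms(4) by simp
      have "\<forall>\<^sub>F t in at_top. lin (q - p) v + t * lin w v < 0" by (rule ev_neg[OF neg])
      moreover have "\<forall>\<^sub>F t in at_top. lin (q - p) (vminus v) + t * lin w (vminus v) < 0"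
        by (rule ev_neg[OF gp(2)])
      ultimately have ev3: "\<forall>\<^sub>F t in at_top. (lin (q - p) v + t * lin w v < 0 \<and>
          lin (q - p) (vminus v) + t * lin w (vminus v) < 0) \<and> q + t *\<^sub>R w \<in> interior (crooked_halfspace v p)"
        using ev by (intro eventually_conj)
      have "\<forall>\<^sub>F (t::real) in at_top. False"
      proof (rule eventually_mono[OF ev3])
        fix t assume H: "(lin (q - p) v + t * lin w v < 0 \<and>
          lin (q - p) (vminus v) + t * lin w (vminus v) < 0) \<and> q + t *\<^sub>R w \<in> interior (crooked_halfspace v p)"
        hence "q + t *\<^sub>R w \<in> crooked_halfspace v p" using subsetD[OF interior_subset] by (elim conjE)
        thus False using H by (auto simp: crooked_halfspace_def xt)
      qed
      thus False by simp
    qed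
  next
    assume pos: "lin w v > 0"
    define Ob where "Ob = {x. 0 < lin (x - p) v} \<inter> {x. lin (x - p) (vplus v) < 0}"
    have oO: "open Ob" unfolding Ob_def
      by (intro open_Int open_Collect_less continuous_on_const cont_lin)
    have sO: "Ob \<subseteq> crooked_halfspace v p" unfolding Ob_def crooked_halfspace_def by auto
    have iO: "Ob \<subseteq> interior (crooked_halfspace v p)" by (rule interior_maximal[OF sO oO])
    have "\<forall>\<^sub>F t in at_top. lin (q - p) v + t * lin w v > 0" by (rule ev_pos[OF pos])
    moreover have "\<forall>\<^sub>F t in at_top. lin (q - p) (vplus v) + t * lin w (vplus v) < 0"
      by (rule ev_neg[OF gp(1)])
    ultimately show "\<forall>\<^sub>F t in at_top. q + t *\<^sub>R w \<in> interior (crooked_halfspace v p)"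
    proof eventually_elim
      case (elim t)
      hence "q + t *\<^sub>R w \<in> Ob" by (simp add: Ob_def xt)
      thus ?case by (rule subsetD[OF iO])
    qed
  qed
  show ?thesis using L R by simp
qed

end
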